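(* Let $w:[0,1]\to\mathbb{R}^+$ be a non-increasing differentiable function (extended to $\mathbb{R}$ by $w(y)=w(0)$ for $y\le0$, $w(y)=w(1)$ for $y\ge1$), and let $R$ be a $k\times k$ doubly stochastic matrix with eigenvalues $1,\lambda_1,\dots,\lambda_s$. Then $\frac1k\mathbf 1$ is a stable equilibrium of the ODE $\dot y=h(y)$, where $h(y)=\frac{\mathbf{w}(y)}{S_w(y)}R-y$, if $$\Re(\lambda_i)>\frac{k\,w(1/k)}{w'(1/k)}\qquad\text{for all } i=1,\dots,s.$$
   Context: $\mathbf 1=(1,\dots,1)\in\mathbb{R}^k$ (row vector). For $y\in\mathbb{R}^k$, $\mathbf{w}(y)=(w(y_1),\dots,w(y_k))$ and $S_w(y)=\sum_i w(y_i)$. $R$ doubly stochastic means nonnegative entries with all row and column sums $1$; $1$ is its maximal eigenvalue and $\lambda_1,\dots,\lambda_s$ denote its remaining distinct eigenvalues. An equilibrium $x^*$ of $\dot y=h(y)$ (i.e. $h(x^* )=0$) is called stable if all eigenvalues of the Jacobian matrix of $h$ at $x^*$ have negative real part. *)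

theory Defs
  imports "HOL-Analysis.Analysis"
begin

definition doubly_stochastic :: "real^'k^'k \<Rightarrow> bool" where
  "doubly_stochastic R \<longleftrightarrow>
     (\<forall>i j. R $ i $ j \<ge> 0) \<and>
     (\<forall>i. (\<Sum>j\<in>UNIV. R $ i $ j) = 1) \<and>
     (\<forall>j. (\<Sum>i\<in>UNIV. R $ i $ j) = 1)"

definition cmat :: "real^'k^'k \<Rightarrow> complex^'k^'k" where
  "cmat A = (\<chi> i j. complex_of_real (A $ i $ j))"

definition is_eigenvalue :: "real^'k^'k \<Rightarrow> complex \<Rightarrow> bool" where
  "is_eigenvalue A \<mu> \<longleftrightarrow> (\<exists>v::complex^'k. v \<noteq> 0 \<and> cmat A *v v = \<mu> *s v)"

definition jacobian :: "(real^'k \<Rightarrow> real^'k) \<Rightarrow> real^'k \<Rightarrow> real^'k^'k" where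
  "jacobian h x = matrix (frechet_derivative h (at x))"

definition stable_equilibrium :: "(real^'k \<Rightarrow> real^'k) \<Rightarrow> real^'k \<Rightarrow> bool" where
  "stable_equilibrium h x \<longleftrightarrow> h x = 0 \<and> h differentiable (at x) \<and>
     (\<forall>\<mu>. is_eigenvalue (jacobian h x) \<mu> \<longrightarrow> Re \<mu> < 0)"

definition wvec :: "(real \<Rightarrow> real) \<Rightarrow> real^'k \<Rightarrow> real^'k" where
  "wvec w y = (\<chi> i. w (y $ i))"

definition S_w :: "(real \<Rightarrow> real) \<Rightarrow> real^'k \<Rightarrow> real" where
  "S_w w y = (\<Sum>i\<in>UNIV. w (y $ i))"

definition hfield :: "(real \<Rightarrow> real) \<Rightarrow> real^'k^'k \<Rightarrow> real^'k \<Rightarrow> real^'k" where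
  "hfield w R y = (1 / S_w w y) *\<^sub>R (wvec w y v* R) - y"

end

theory Submission imports Defs begin

lemma eig_transpose:
  fixes A :: "complex^'n^'n"
  assumes "v \<noteq> 0" "transpose A *v v = \<nu> *s v"
  shows "\<exists>u. u \<noteq> 0 \<and> A *v u = \<nu> *s u"
proof -
  let ?B = "A - mat \<nu>"
  have e: "\<And>M::complex^'n^'n. \<And>x. (M - mat \<nu>) *v x = M *v x - \<nu> *s x"
  proof -
    fix M :: "complex^'n^'n" and x :: "complex^'n"
    have d: "\<And>i j c (y::complex). (if i = j then c else 0) * y = (if i = j then c*y else 0)" by simp
    have "mat \<nu> *v x = \<nu> *s x"
      by (simp add: vec_eq_iff matrix_vector_mult_def mat_def d)
    then show "(M - mat \<nu>) *v x = M *v x - \<nu> *s x" by (simp add: matrix_vector_mult_diff_rdistrib)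
  qed
  have tr: "transpose ?B = transpose A - mat \<nu>"
    by (simp add: vec_eq_iff transpose_def mat_def)
  have "transpose ?B *v v = 0" unfolding tr e using assms by simp
  then have "\<not>(\<exists>B. B ** transpose ?B = mat 1)" using assms(1) matrix_left_invertible_ker by blast
  then have "\<not>(\<exists>B. ?B ** B = mat 1)" using left_invertible_transpose by blast
  then have "\<not>(\<exists>B. B ** ?B = mat 1)" using matrix_left_right_inverse by blast
  then obtain u where "?B *v u = 0" "u \<noteq> 0" using matrix_left_invertible_ker by blast
  then show ?thesis unfolding e by auto
qed

lemma eig_J:
  fixes R :: "real^'k^'k" and a :: real
  assumes ds: "doubly_stochastic R" and a: "a \<le> 0"
    and cnd: "\<forall>\<mu>. is_eigenvalue R \<mu> \<and> \<mu> \<noteq> 1 \<longrightarrow> a * Re \<mu> < 1"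
    and ev: "is_eigenvalue (\<chi> j m. a * (R$m$j - 1 / real CARD('k)) - (if j = m then 1 else 0)) \<mu>"
  shows "Re \<mu> < 0"
proof -
  define n where "n = real CARD('k)"
  have n0: "n > 0" unfolding n_def by simp
  obtain z where z0: "z \<noteq> 0" and zev: "cmat (\<chi> j m. a * (R$m$j - 1 / n) - (if j = m then 1 else 0)) *v z = \<mu> *s z"
    using ev unfolding is_eigenvalue_def n_def by blast
  define s where "s = (\<Sum>m\<in>UNIV. z$m)"
  define t where "t = (\<chi> j. \<Sum>m\<in>UNIV. complex_of_real (R$m$j) * z$m)"
  have comp: "of_real a * t$j - of_real a * s / of_real n - z$j = \<mu> * z$j" for j
  proof -
    have "\<mu> * z$j = (cmat (\<chi> j m. a * (R$m$j - 1 / n) - (if j = m then 1 else 0)) *v z) $ j"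
      using zev by simp
    also have "\<dots> = (\<Sum>m\<in>UNIV. (of_real a * of_real (R$m$j) - of_real a / of_real n - (if j = m then 1 else 0)) * z$m)"
      unfolding matrix_vector_mult_def cmat_def vec_lambda_beta
      by (intro sum.cong refl) (simp add: algebra_simps)
    also have "\<dots> = (\<Sum>m\<in>UNIV. of_real a * (of_real (R$m$j) * z$m)) - (\<Sum>m\<in>UNIV. of_real a * z$m / of_real n) - (\<Sum>m\<in>UNIV. (if j = m then 1 else 0) * z$m)"
      unfolding left_diff_distrib sum_subtractf by (simp add: mult.assoc)
    also have "(\<Sum>m\<in>UNIV. (if j = m then 1 else 0) * z$m) = z$j"
    proof -
      have d: "\<And>m. (if j = m then 1 else 0) * z$m = (if j = m then z$m else 0)" by simp
      show ?thesis unfolding d by simp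
    qed
    also have "(\<Sum>m\<in>UNIV. of_real a * (of_real (R$m$j) * z$m)) = of_real a * t$j"
      by (simp add: t_def sum_distrib_left)
    also have "(\<Sum>m\<in>UNIV. of_real a * z$m / of_real n) = of_real a * s / of_real n"
      by (simp add: s_def sum_distrib_left sum_divide_distrib)
    finally show ?thesis by simp
  qed
  have st: "(\<Sum>j\<in>UNIV. t$j) = s"
  proof -
    have "(\<Sum>j\<in>UNIV. t$j) = (\<Sum>m\<in>UNIV. (\<Sum>j\<in>UNIV. complex_of_real (R$m$j)) * z$m)"
    proof -
      have "(\<Sum>j\<in>UNIV. t$j) = (\<Sum>j\<in>UNIV. \<Sum>m\<in>UNIV. complex_of_real (R$m$j) * z$m)"
        unfolding t_def by simp
      also have "\<dots> = (\<Sum>m\<in>UNIV. \<Sum>j\<in>UNIV. complex_of_real (R$m$j) * z$m)"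
        by (rule sum.swap)
      also have "\<dots> = (\<Sum>m\<in>UNIV. (\<Sum>j\<in>UNIV. complex_of_real (R$m$j)) * z$m)"
        by (simp only: sum_distrib_right)
      finally show ?thesis .
    qed
    also have "\<dots> = s" using ds unfolding doubly_stochastic_def s_def
      by (simp flip: of_real_sum)
    finally show ?thesis .
  qed
  have cardn: "(\<Sum>j\<in>(UNIV::'k set). c) = of_real n * c" for c :: complex
    by (simp add: n_def)
  have "(\<Sum>j\<in>UNIV. of_real a * t$j - of_real a * s / of_real n - z$j) = (\<Sum>j\<in>UNIV. \<mu> * z$j)"
    using comp by simp
  then have "of_real a * s - of_real a * s - s = \<mu> * s"
  proof -
    have "(\<Sum>j\<in>UNIV. of_real a * t$j - of_real a * s / of_real n - z$j) =
      of_real a * (\<Sum>j\<in>UNIV. t$j) - (\<Sum>j\<in>(UNIV::'k set). of_real a * s / of_real n) - s"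
      by (simp only: sum_subtractf sum_distrib_left s_def)
    also have "\<dots> = of_real a * s - of_real a * s - s"
      using n0 by (simp only: st cardn) simp
    finally have 1: "(\<Sum>j\<in>UNIV. of_real a * t$j - of_real a * s / of_real n - z$j) = of_real a * s - of_real a * s - s" .
    have 2: "(\<Sum>j\<in>UNIV. \<mu> * z$j) = \<mu> * s" by (simp only: s_def sum_distrib_left)
    show ?thesis using 1 2 \<open>(\<Sum>j\<in>UNIV. of_real a * t$j - of_real a * s / of_real n - z$j) = (\<Sum>j\<in>UNIV. \<mu> * z$j)\<close> by simp
  qed
  then have "\<mu> * s = - s" by simp
  then have "\<mu> * s + s = 0" by (simp only: eq_neg_iff_add_eq_0)
  then have ms: "(\<mu> + 1) * s = 0" by (simp add: distrib_right)
  show ?thesis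
  proof (cases "\<mu> = -1")
    case True then show ?thesis by simp
  next
    case False
    then have m1: "\<mu> + 1 \<noteq> 0" by (simp add: add_eq_0_iff2)
    then have s0: "s = 0" using ms by simp
    have at: "of_real a * t$j = (\<mu> + 1) * z$j" for j using comp[of j] s0 by (simp add: algebra_simps)
    show ?thesis
    proof (cases "a = 0")
      case True
      then have "(\<mu> + 1) * z$j = 0" for j using at by simp
      moreover note m1
      ultimately have "z = 0" by (simp add: vec_eq_iff)
      then show ?thesis using z0 by simp
    next
      case an: False
      define \<nu> where "\<nu> = (\<mu> + 1) / of_real a"
      have "transpose (cmat R) *v z = \<nu> *s z"
      proof -
        have tj: "t$j = \<nu> * z$j" for j
        proof -
          have "t$j = ((\<mu>+1) * z$j) / of_real a" using at[of j] an by (simp add: eq_divide_eq mult.commute)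
          then show ?thesis by (simp add: \<nu>_def)
        qed
        have "transpose (cmat R) *v z = t"
          by (simp add: vec_eq_iff t_def matrix_vector_mult_def transpose_def cmat_def)
        then show ?thesis using tj by (simp add: vec_eq_iff)
      qed
      then obtain u where "u \<noteq> 0" "cmat R *v u = \<nu> *s u" using eig_transpose z0 by blast
      then have evR: "is_eigenvalue R \<nu>" unfolding is_eigenvalue_def by blast
      have re: "a * Re \<nu> = Re \<mu> + 1" using an by (simp add: \<nu>_def)
      show ?thesis
      proof (cases "\<nu> = 1")
        case True
        then have "Re \<mu> + 1 = a" using re by simp
        then show ?thesis using a by simp
      next
        case False
        then have "a * Re \<nu> < 1" using cnd evR by blast
        then show ?thesis using re by simp
      qed
    qed
  qed
qed

lemma final:
  fixes R :: "real^'k^'k" and a :: real and h :: "real^'k \<Rightarrow> real^'k"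
  assumes ds: "doubly_stochastic R" and a: "a \<le> 0"
    and cnd: "\<forall>\<mu>. is_eigenvalue R \<mu> \<and> \<mu> \<noteq> 1 \<longrightarrow> a * Re \<mu> < 1"
    and hd: "(h has_derivative L) (at x)"
    and mL: "matrix L = (\<chi> j m. a * (R$m$j - 1 / real CARD('k)) - (if j = m then 1 else 0))"
    and h0: "h x = 0"
  shows "stable_equilibrium h x"
proof -
  have fd: "frechet_derivative h (at x) = L" using frechet_derivative_at[OF hd] by simp
  have "h differentiable (at x)" using hd unfolding differentiable_def by blast
  moreover have "\<forall>\<mu>. is_eigenvalue (Defs.jacobian h x) \<mu> \<longrightarrow> Re \<mu> < 0"
    unfolding Defs.jacobian_def fd mL using eig_J[OF ds a cnd] by blast
  ultimately show ?thesis unfolding stable_equilibrium_def using h0 by blast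
qed

lemma hx0:
  fixes R :: "real^'k^'k" and w :: "real \<Rightarrow> real"
  assumes ds: "doubly_stochastic R" and wc: "w (1 / real CARD('k)) > 0"
  shows "hfield w R (\<chi> i. 1 / real CARD('k)) = 0"
proof -
  define n where "n = real CARD('k)"
  have n0: "n > 0" unfolding n_def by simp
  have S: "S_w w ((\<chi> i. 1 / n)::real^'k) = n * w (1/n)" by (simp add: S_w_def n_def)
  have G: "wvec w ((\<chi> i. 1 / n)::real^'k) v* R = (\<chi> j. w (1/n))"
  proof -
    have "(\<Sum>i\<in>UNIV. w (1/n) * R$i$j) = w (1/n)" for j
      using ds unfolding doubly_stochastic_def by (simp flip: sum_distrib_left)
    then show ?thesis by (simp add: vec_eq_iff vector_matrix_mult_def wvec_def)
  qed
  show ?thesis using n0 wc unfolding hfield_def n_def[symmetric] S G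
    by (simp add: vec_eq_iff n_def)
qed

theorem proposition3:
  fixes w w' :: "real \<Rightarrow> real" and R :: "real^'k^'k"
  assumes pos: "\<forall>y\<in>{0..1}. w y > 0"
    and noninc: "\<forall>x y. 0 \<le> x \<and> x \<le> y \<and> y \<le> 1 \<longrightarrow> w y \<le> w x"
    and diff: "\<forall>x\<in>{0..1}. (w has_real_derivative w' x) (at x within {0..1})"
    and ext0: "\<forall>y\<le>0. w y = w 0"
    and ext1: "\<forall>y\<ge>1. w y = w 1"
    and ds: "doubly_stochastic R"
    and cond: "\<forall>\<mu>. is_eigenvalue R \<mu> \<and> \<mu> \<noteq> 1 \<longrightarrow>
        Re \<mu> > real CARD('k) * w (1 / real CARD('k)) / w' (1 / real CARD('k))"
  shows "stable_equilibrium (hfield w R) (\<chi> i. 1 / real CARD('k))"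
proof -
  define n where "n = real CARD('k)"
  define c where "c = 1 / n"
  define x where "x = ((\<chi> i. c) :: real^'k)"
  have n0: "n > 0" unfolding n_def by simp
  have wpos: "w y > 0" for y
  proof (cases "y \<le> 0")
    case True
    then have "w y = w 0" using ext0 by blast
    moreover have "w 0 > 0" using pos by simp
    ultimately show ?thesis by simp
  next
    case False
    show ?thesis
    proof (cases "y \<ge> 1")
      case True
      then have "w y = w 1" using ext1 by blast
      moreover have "w 1 > 0" using pos by simp
      ultimately show ?thesis by simp
    next
      case False2: False
      then have "y \<in> {0..1}" using False by simp
      then show ?thesis using pos by blast
    qed
  qed
  have h0: "hfield w R x = 0" unfolding x_def c_def n_def using hx0[OF ds wpos] .
  show ?thesis
  proof (cases "CARD('k) = 1")
    case True
    have R1: "R$i$j = 1" for i j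
    proof -
      obtain x0 where x0: "(UNIV::'k set) = {x0}" using card_1_singletonE[OF True] by blast
      have "i \<in> (UNIV::'k set)" by simp
      then have "i \<in> {x0}" by (simp only: x0)
      then have "i = x0" by simp
      then have U: "(UNIV::'k set) = {i}" using x0 by simp
      have "j \<in> (UNIV::'k set)" by simp
      then have "j \<in> {i}" by (simp only: U)
      then have "j = i" by simp
      moreover have "(\<Sum>j\<in>UNIV. R$i$j) = 1" using ds unfolding doubly_stochastic_def by blast
      moreover have "(\<Sum>j\<in>UNIV. R$i$j) = R$i$i" unfolding U by simp
      ultimately show ?thesis by simp
    qed
    have hf: "hfield w R = (\<lambda>y. 1 - y)"
    proof
      fix y :: "real^'k"
      obtain x0 where x0: "(UNIV::'k set) = {x0}" using card_1_singletonE[OF True] by blast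
      have U: "(UNIV::'k set) = {i}" for i
      proof -
        have "i \<in> (UNIV::'k set)" by simp
        then have "i \<in> {x0}" by (simp only: x0)
        then have "i = x0" by simp
        then show ?thesis using x0 by simp
      qed
      have "hfield w R y $ j = 1 - y $ j" for j
      proof -
        have "hfield w R y $ j = (1 / w (y$j)) * (w (y$j) * R$j$j) - y$j"
          unfolding hfield_def S_w_def wvec_def vector_matrix_mult_def U[of j] by simp
        then show ?thesis using wpos[of "y$j"] R1 by simp
      qed
      then show "hfield w R y = 1 - y" by (simp add: vec_eq_iff)
    qed
    have hd: "(hfield w R has_derivative (\<lambda>v. - v)) (at x)"
      unfolding hf by (auto intro!: derivative_eq_intros)
    have mL: "matrix (\<lambda>v::real^'k. - v) = (\<chi> j m. 0 * (R$m$j - 1 / real CARD('k)) - (if j = m then 1 else 0))"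
      by (simp add: matrix_def vec_eq_iff axis_def)
    have "stable_equilibrium (hfield w R) x"
      by (rule final[OF ds _ _ hd mL h0]) auto
    then show ?thesis unfolding x_def c_def n_def .
  next
    case False
    moreover have "CARD('k) > 0" by simp
    ultimately have "CARD('k) \<ge> 2" by arith
    then have n2: "n \<ge> 2" unfolding n_def by simp
    then have c01: "0 < c" "c < 1" unfolding c_def by auto
    define d where "d = w' c"
    have wd: "(w has_real_derivative d) (at c)"
    proof -
      have "c \<in> interior {0..1::real}" using c01 by simp
      then have iw: "at c within {0..1} = at c" by (rule at_within_interior)
      have "c \<in> {0..1}" using c01 by simp
      then have "(w has_real_derivative w' c) (at c within {0..1})" using diff by blast
      then show ?thesis unfolding d_def iw .
    qed
    have d0: "d \<le> 0"
    proof (rule ccontr)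
      assume "\<not> d \<le> 0"
      then obtain e where e: "e > 0" "\<forall>h>0. h < e \<longrightarrow> w c < w (c + h)"
        using DERIV_pos_inc_right[OF wd] by auto
      define h where "h = min (e/2) ((1 - c)/2)"
      have "h > 0" "h < e" using e c01 unfolding h_def by auto
      have "h \<le> (1 - c)/2" unfolding h_def by (rule min.cobounded2)
      then have "c + h \<le> 1" using c01 by (simp add: field_simps)
      have "w c < w (c + h)" using e(2) \<open>h > 0\<close> \<open>h < e\<close> by blast
      moreover have "w (c + h) \<le> w c" using noninc[rule_format, of c "c+h"] c01 \<open>h > 0\<close> \<open>c + h \<le> 1\<close> by simp
      ultimately show False by simp
    qed
    define a where "a = d / (n * w c)"
    have wc: "w c > 0" by (rule wpos)
    have a0: "a \<le> 0" unfolding a_def using d0 wc n0 by (simp add: divide_nonpos_pos)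
    have cnd: "\<forall>\<mu>. is_eigenvalue R \<mu> \<and> \<mu> \<noteq> 1 \<longrightarrow> a * Re \<mu> < 1"
    proof (intro allI impI)
      fix \<mu> assume m: "is_eigenvalue R \<mu> \<and> \<mu> \<noteq> 1"
      show "a * Re \<mu> < 1"
      proof (cases "d = 0")
        case True then show ?thesis unfolding a_def by simp
      next
        case False
        then have dn: "d < 0" using d0 by simp
        then have an: "a < 0" unfolding a_def using wc n0 by (simp add: divide_neg_pos)
        have "Re \<mu> > n * w c / d" using cond m unfolding n_def c_def d_def by blast
        moreover have "n * w c / d = 1 / a" unfolding a_def by simp
        ultimately have "a * Re \<mu> < a * (1 / a)" using an by (intro mult_strict_left_mono_neg) auto
        then show ?thesis using an by simp
      qed
    qed
    define S where "S = (\<lambda>y::real^'k. S_w w y)"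
    define G where "G = (\<lambda>y::real^'k. \<Sum>i\<in>UNIV. w (y$i) *\<^sub>R R$i)"
    have hf: "hfield w R = (\<lambda>y. inverse (S y) *\<^sub>R G y - y)"
    proof
      fix y :: "real^'k"
      have "wvec w y v* R = G y"
        by (simp add: vec_eq_iff vector_matrix_mult_def wvec_def G_def)
      then show "hfield w R y = inverse (S y) *\<^sub>R G y - y"
        unfolding hfield_def S_def by (simp add: divide_inverse)
    qed
    have comp: "((\<lambda>y::real^'k. w (y$i)) has_derivative (\<lambda>v. d * v$i)) (at x)" for i
    proof -
      have wd': "(w has_derivative (\<lambda>t. d * t)) (at (x$i))"
        using wd unfolding has_field_derivative_def x_def by simp
      have "((\<lambda>y::real^'k. y$i) has_derivative (\<lambda>v. v$i)) (at x)"
        by (rule bounded_linear.has_derivative[OF bounded_linear_vec_nth has_derivative_ident])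
      from has_derivative_compose[OF this wd'] show ?thesis .
    qed
    have Sd: "(S has_derivative (\<lambda>v. \<Sum>i\<in>UNIV. d * v$i)) (at x)"
      unfolding S_def S_w_def by (rule has_derivative_sum) (rule comp)
    have Gd: "(G has_derivative (\<lambda>v. \<Sum>i\<in>UNIV. (d * v$i) *\<^sub>R R$i)) (at x)"
      unfolding G_def by (intro has_derivative_sum has_derivative_scaleR_left comp)
    have Sx: "S x = n * w c" by (simp add: S_def S_w_def x_def n_def)
    have Sx0: "S x \<noteq> 0" using Sx n0 wc by simp
    define L where "L = (\<lambda>v. inverse (S x) *\<^sub>R (\<Sum>i\<in>UNIV. (d * v$i) *\<^sub>R R$i)
       + (- (inverse (S x) * (\<Sum>i\<in>UNIV. d * v$i) * inverse (S x))) *\<^sub>R G x - v)"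
    have hd: "(hfield w R has_derivative L) (at x)"
    proof -
      have Id: "((\<lambda>y. inverse (S y)) has_derivative (\<lambda>h. - (inverse (S x) * (\<Sum>i\<in>UNIV. d * h$i) * inverse (S x)))) (at x)"
        by (rule Deriv.has_derivative_inverse[OF Sx0 Sd])
      have P: "((\<lambda>y. inverse (S y) *\<^sub>R G y) has_derivative (\<lambda>h. inverse (S x) *\<^sub>R (\<Sum>i\<in>UNIV. (d * h$i) *\<^sub>R R$i) + (- (inverse (S x) * (\<Sum>i\<in>UNIV. d * h$i) * inverse (S x))) *\<^sub>R G x)) (at x)"
        by (rule has_derivative_scaleR[OF Id Gd])
      have "((\<lambda>y. inverse (S y) *\<^sub>R G y - y) has_derivative L) (at x)"
        unfolding L_def by (rule has_derivative_diff[OF P has_derivative_ident])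
      then show ?thesis unfolding hf .
    qed
    have Gx: "G x $ j = w c" for j
    proof -
      have "G x $ j = (\<Sum>i\<in>UNIV. w c * R$i$j)" by (simp add: G_def x_def)
      also have "\<dots> = w c" using ds unfolding doubly_stochastic_def by (simp flip: sum_distrib_left)
      finally show ?thesis .
    qed
    have ax: "(\<Sum>i\<in>UNIV. f i * (axis m 1 $ i)) = f m" for f :: "'k \<Rightarrow> real" and m
    proof -
      have "f i * (axis m 1 $ i) = (if i = m then f m else 0)" for i by (simp add: axis_def)
      then show ?thesis by simp
    qed
    have Lax: "L (axis m 1) $ j = a * (R$m$j - 1 / n) - (if j = m then 1 else 0)" for m j
    proof -
      have e1: "(\<Sum>i\<in>UNIV. d * (axis m 1 $ i) * R$i$j) = d * R$m$j"
        using ax[of "\<lambda>i. d * R$i$j" m] by (simp add: mult.commute mult.left_commute)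
      have e2: "(\<Sum>i\<in>UNIV. d * (axis m 1 $ i)) = d"
        using ax[of "\<lambda>i. d" m] by (simp add: mult.commute)
      have "L (axis m 1) $ j = inverse (S x) * (d * R$m$j) - inverse (S x) * d * inverse (S x) * w c - (if j = m then 1 else 0)"
      proof -
        have ajm: "axis m (1::real) $ j = (if j = m then 1 else 0)" by (simp add: axis_def)
        show ?thesis unfolding L_def by (simp add: e1 e2 Gx ajm)
      qed
      also have "\<dots> = a * (R$m$j - 1 / n) - (if j = m then 1 else 0)"
        unfolding Sx a_def using n0 wc by (simp add: field_simps)
      finally show ?thesis .
    qed
    have mL: "matrix L = (\<chi> j m. a * (R$m$j - 1 / real CARD('k)) - (if j = m then 1 else 0))"
      by (simp add: matrix_def vec_eq_iff Lax n_def)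
    have "stable_equilibrium (hfield w R) x"
      by (rule final[OF ds a0 cnd hd mL h0])
    then show ?thesis unfolding x_def c_def n_def .
  qed
qed

end
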